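(* For all $A,B\in[\mathbb{N}]^{<\omega}$ we have $d_{\mathrm{sum}}(A,B)=d_{\mathrm{I}}(A,B)$. Moreover, if $\#A=\#B=k$, then there is a path of length $d_{\mathrm{I}}(A,B)$ from $A$ to $B$ in the universal interlacing graph all of whose vertices lie in $[\mathbb{N}]^k$; consequently the restriction of $d_{\mathrm{I}}$ to $[\mathbb{N}]^k$ equals $d^{(k)}_{\mathrm{I}}$.
   Context: The universal interlacing graph has vertex set $[\mathbb{N}]^{<\omega}$ (finite subsets of $\mathbb{N}$, listed increasingly). Two vertices $A=\{a_1<\dots<a_n\}$ and $B=\{b_1<\dots<b_m\}$ with $A\ne B$ are adjacent iff one of: (i) $n=m+1$ and $a_i\le b_i\le a_{i+1}$ for $1\le i\le m$; (ii) $m=n+1$ and $b_i\le a_i\le b_{i+1}$ for $1\le i\le n$; (iii) $n=m$, $a_i\le b_i\le a_{i+1}$ for $1\le i<n$, and $a_n\le b_n$; (iv) $n=m$, $b_i\le a_i\le b_{i+1}$ for $1\le i<n$, and $b_n\le a_n$. Also $\emptyset$ is adjacent to every singleton. $d_{\mathrm{I}}$ is the shortest-path metric of this graph. For $k\in\mathbb{N}$, Kalton's interlacing graph on $[\mathbb{N}]^k$ (subsets of cardinality $k$) has edges given by (iii) or (iv), and $d^{(k)}_{\mathrm{I}}$ is its graph metric. The summing distance is $d_{\mathrm{sum}}(A,B)=\max\{|\#(A\cap E)-\#(B\cap E)|: E\text{ an interval of }\mathbb{N}\}$ (equivalently $\|\sum_{i\in A}s_i-\sum_{i\in B}s_i\|_{\mathrm{sum}}$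 with $\|\sum a_is_i\|_{\mathrm{sum}}=\sup_{k\le m}|\sum_{i=k}^m a_i|$). *)

theory Defs
  imports "HOL-Analysis.Analysis" "HOL-Library.Extended_Nat"
begin

definition vertex :: "nat set \<Rightarrow> bool" where
  "vertex A \<longleftrightarrow> finite A \<and> 0 \<notin> A"

text \<open>The interlacing conditions, with sets listed increasingly
  (0-based indices into sorted_list_of_set).\<close>
definition interl_lower :: "nat list \<Rightarrow> nat list \<Rightarrow> bool" where
  "interl_lower a b \<longleftrightarrow> length a = length b + 1 \<and>
     (\<forall>i < length b. a ! i \<le> b ! i \<and> b ! i \<le> a ! (i+1))"

definition interl_same :: "nat list \<Rightarrow> nat list \<Rightarrow> bool" where
  "interl_same a b \<longleftrightarrow> length a = length b \<and>
     (\<forall>i. i + 1 < length a \<longrightarrow> a ! i \<le> b ! i \<and> b ! i \<le> a ! (i+1)) \<and>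
     (length a \<ge> 1 \<longrightarrow> a ! (length a - 1) \<le> b ! (length a - 1))"

definition univ_adj :: "nat set \<Rightarrow> nat set \<Rightarrow> bool" where
  "univ_adj A B \<longleftrightarrow> A \<noteq> B \<and>
     (let a = sorted_list_of_set A; b = sorted_list_of_set B in
        interl_lower a b \<or> interl_lower b a \<or> interl_same a b \<or> interl_same b a
        \<or> (A = {} \<and> card B = 1) \<or> (B = {} \<and> card A = 1))"

definition kalton_adj :: "nat \<Rightarrow> nat set \<Rightarrow> nat set \<Rightarrow> bool" where
  "kalton_adj k A B \<longleftrightarrow> A \<noteq> B \<and> card A = k \<and> card B = k \<and>
     (let a = sorted_list_of_set A; b = sorted_list_of_set B in
        interl_same a b \<or> interl_same b a)"

text \<open>A walk from A to B in a graph with vertex predicate V and adjacency E,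
  given as its list of vertices; its length is the number of edges.\<close>
definition is_walk :: "(nat set \<Rightarrow> bool) \<Rightarrow> (nat set \<Rightarrow> nat set \<Rightarrow> bool)
    \<Rightarrow> nat set list \<Rightarrow> nat set \<Rightarrow> nat set \<Rightarrow> bool" where
  "is_walk V E ps A B \<longleftrightarrow> ps \<noteq> [] \<and> hd ps = A \<and> last ps = B \<and>
     (\<forall>X \<in> set ps. V X) \<and>
     (\<forall>i. i + 1 < length ps \<longrightarrow> E (ps ! i) (ps ! (i+1)))"

text \<open>Graph (shortest-path) metric, infinite if no path exists.\<close>
definition graph_dist :: "(nat set \<Rightarrow> bool) \<Rightarrow> (nat set \<Rightarrow> nat set \<Rightarrow> bool)
    \<Rightarrow> nat set \<Rightarrow> nat set \<Rightarrow> enat" where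
  "graph_dist V E A B = (INF ps \<in> {ps. is_walk V E ps A B}. enat (length ps - 1))"

definition d_I :: "nat set \<Rightarrow> nat set \<Rightarrow> enat" where
  "d_I = graph_dist vertex univ_adj"

definition d_I_k :: "nat \<Rightarrow> nat set \<Rightarrow> nat set \<Rightarrow> enat" where
  "d_I_k k = graph_dist (\<lambda>X. vertex X \<and> card X = k) (kalton_adj k)"

definition d_sum :: "nat set \<Rightarrow> nat set \<Rightarrow> nat" where
  "d_sum A B = Sup {nat \<bar>int (card (A \<inter> {p..q})) - int (card (B \<inter> {p..q}))\<bar> | p q. 1 \<le> p}"

end

theory Submission
  imports Defs
begin

definition cnt :: "nat set \<Rightarrow> nat \<Rightarrow> nat" where
  "cnt X n = card {x\<in>X. x \<le> n}"

definition gd :: "nat set \<Rightarrow> nat set \<Rightarrow> nat \<Rightarrow> int" where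
  "gd A B n = int (cnt A n) - int (cnt B n)"

lemma cnt_Suc:
  assumes "finite X"
  shows "cnt X (Suc n) = cnt X n + (if Suc n \<in> X then 1 else 0)"
proof -
  have e: "{x\<in>X. x \<le> Suc n} = {x\<in>X. x \<le> n} \<union> (if Suc n \<in> X then {Suc n} else {})"
    by (auto simp: le_Suc_eq)
  have f: "finite {x\<in>X. x \<le> n}" using assms by simp
  show ?thesis unfolding cnt_def e using f by (auto)
qed

lemma cnt_0: "0 \<notin> X \<Longrightarrow> cnt X 0 = 0"
  unfolding cnt_def by (auto intro!: card_eq_0_iff[THEN iffD2])

lemma cnt_le_card: "finite X \<Longrightarrow> cnt X n \<le> card X"
  unfolding cnt_def by (intro card_mono) auto

lemma cnt_big: "\<forall>x\<in>X. x \<le> n \<Longrightarrow> cnt X n = card X"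
  unfolding cnt_def by (metis (mono_tags, lifting) Collect_mem_eq Collect_cong)

lemma galois:
  assumes fin: "finite X" and i: "i < length (sorted_list_of_set X)"
  shows "(sorted_list_of_set X ! i \<le> n) \<longleftrightarrow> i < cnt X n"
proof -
  define a where "a = sorted_list_of_set X"
  have sa: "sorted_wrt (<) a" using fin unfolding a_def by (simp add: strict_sorted_list_of_set)
  have da: "distinct a" using fin unfolding a_def by simp
  have seta: "set a = X" using fin unfolding a_def by simp
  have i': "i < length a" using i a_def by simp
  have fin2: "finite {x\<in>X. x \<le> n}" using fin by simp
  show ?thesis unfolding a_def[symmetric]
  proof
    assume le: "a ! i \<le> n"
    have sub: "(\<lambda>j. a ! j) ` {0..i} \<subseteq> {x\<in>X. x \<le> n}"
    proof
      fix x assume "x \<in> (\<lambda>j. a ! j) ` {0..i}"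
      then obtain j where j: "j \<le> i" "x = a ! j" by auto
      have "a ! j \<le> a ! i"
        using sorted_wrt_nth_less[OF sa, of j i] i' j by (cases "j = i") auto
      then show "x \<in> {x\<in>X. x \<le> n}" using j le seta i' by auto
    qed
    have inj: "inj_on (\<lambda>j. a ! j) {0..i}"
      using da i' by (auto simp: inj_on_def nth_eq_iff_index_eq)
    have "card ((\<lambda>j. a ! j) ` {0..i}) = Suc i" using card_image[OF inj] by simp
    then have "Suc i \<le> cnt X n" unfolding cnt_def using card_mono[OF fin2 sub] by simp
    then show "i < cnt X n" by simp
  next
    assume lt: "i < cnt X n"
    show "a ! i \<le> n"
    proof (rule ccontr)
      assume "\<not> a ! i \<le> n"
      then have gt: "a ! i > n" by simp
      have sub: "{x\<in>X. x \<le> n} \<subseteq> (\<lambda>j. a ! j) ` {0..<i}"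
      proof
        fix x assume x: "x \<in> {x\<in>X. x \<le> n}"
        then obtain j where j: "j < length a" "x = a ! j" using seta by (auto simp: in_set_conv_nth)
        have "j < i"
        proof (rule ccontr)
          assume "\<not> j < i"
          then have "a ! i \<le> a ! j"
            using sorted_wrt_nth_less[OF sa, of i j] j by (cases "j = i") auto
          then show False using gt x j by auto
        qed
        then show "x \<in> (\<lambda>j. a ! j) ` {0..<i}" using j by auto
      qed
      have "cnt X n \<le> card ((\<lambda>j. a ! j) ` {0..<i})" unfolding cnt_def
        by (rule card_mono) (auto simp: sub)
      also have "\<dots> \<le> i" using card_image_le[of "{0..<i}" "\<lambda>j. a ! j"] by simp
      finally show False using lt by simp
    qed
  qed
qed

lemma interval_card:
  assumes "finite X" "1 \<le> p" "p \<le> q"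
  shows "int (card (X \<inter> {p..q})) = int (cnt X q) - int (cnt X (p - 1))"
proof -
  have e: "{x\<in>X. x \<le> q} = {x\<in>X. x \<le> p - 1} \<union> (X \<inter> {p..q})" using assms by auto
  have "card {x\<in>X. x \<le> q} = card {x\<in>X. x \<le> p - 1} + card (X \<inter> {p..q})"
    unfolding e using assms by (intro card_Un_disjoint) auto
  then show ?thesis unfolding cnt_def by simp
qed


lemma finite_bound: "finite (X::nat set) \<Longrightarrow> \<exists>N. \<forall>x\<in>X. x \<le> N"
  using finite_nat_set_iff_bounded_le by blast

lemma len_sl: "finite X \<Longrightarrow> length (sorted_list_of_set X) = card X"
  by simp

lemma bounds_to_conds:
  assumes fA: "finite A" and fB: "finite B"
    and bd: "\<forall>n. 0 \<le> gd A B n \<and> gd A B n \<le> 1"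
  defines "a \<equiv> sorted_list_of_set A" and "b \<equiv> sorted_list_of_set B"
  shows "(length a = length b \<or> length a = length b + 1) \<and>
         (\<forall>i < length b. a ! i \<le> b ! i) \<and>
         (\<forall>i. i < length b \<longrightarrow> i + 1 < length a \<longrightarrow> b ! i \<le> a ! (i+1))"
proof (intro conjI allI impI)
  obtain N where N: "\<forall>x\<in>A \<union> B. x \<le> N" using finite_bound[of "A \<union> B"] fA fB by auto
  have "cnt A N = card A" "cnt B N = card B" using N cnt_big by auto
  moreover have "0 \<le> gd A B N" "gd A B N \<le> 1" using bd by auto
  ultimately have lens: "card A = card B \<or> card A = card B + 1" unfolding gd_def by linarith
  then show "length a = length b \<or> length a = length b + 1"
    unfolding a_def b_def using fA fB by simp
  have la: "length a = card A" and lb: "length b = card B" unfolding a_def b_def using fA fB by auto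
  fix i
  {
    assume i: "i < length b"
    define n where "n = b ! i"
    have "i < cnt B n" using galois[OF fB, of i n] i n_def b_def by simp
    moreover have "cnt B n \<le> cnt A n" using bd[rule_format, of n] unfolding gd_def by simp
    ultimately have "i < cnt A n" by simp
    moreover have "i < length a" using i la lb lens by auto
    ultimately have "a ! i \<le> n" using galois[OF fA, of i n] a_def by simp
    then show "a ! i \<le> b ! i" using n_def by simp
  }
  {
    assume i: "i < length b" and i1: "i + 1 < length a"
    show "b ! i \<le> a ! (i+1)"
    proof (rule ccontr)
      assume c: "\<not> b ! i \<le> a ! (i+1)"
      define n where "n = a ! (i+1)"
      have "i + 1 < cnt A n" using galois[OF fA, of "i+1" n] i1 n_def a_def by simp
      moreover have "\<not> i < cnt B n" using galois[OF fB, of i n] i c n_def b_def by simp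
      ultimately have "gd A B n \<ge> 2" unfolding gd_def by simp
      then show False using bd by (metis one_less_numeral_iff order.trans not_le semiring_norm(76))
    qed
  }
qed

lemma conds_to_bounds:
  assumes fA: "finite A" and fB: "finite B"
  defines "a \<equiv> sorted_list_of_set A" and "b \<equiv> sorted_list_of_set B"
  assumes lens: "length a = length b \<or> length a = length b + 1"
    and P1: "\<forall>i < length b. a ! i \<le> b ! i"
    and P2: "\<forall>i. i < length b \<longrightarrow> i + 1 < length a \<longrightarrow> b ! i \<le> a ! (i+1)"
  shows "0 \<le> gd A B n \<and> gd A B n \<le> 1"
proof -
  have la: "length a = card A" and lb: "length b = card B" unfolding a_def b_def using fA fB by auto
  define k where "k = cnt B n"
  have kle: "k \<le> length b" using cnt_le_card[OF fB] k_def lb by simp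
  have ge: "k \<le> cnt A n"
  proof (cases k)
    case 0 then show ?thesis by simp
  next
    case (Suc k')
    have k'b: "k' < length b" using kle Suc by simp
    have "b ! k' \<le> n" using galois[OF fB, of k' n] k'b Suc k_def b_def by simp
    moreover have "a ! k' \<le> b ! k'" using P1 k'b by simp
    moreover have k'a: "k' < length a" using k'b lens by auto
    ultimately have "k' < cnt A n" using galois[OF fA, of k' n] a_def by simp
    then show ?thesis using Suc by simp
  qed
  have le: "cnt A n \<le> k + 1"
  proof (rule ccontr)
    assume "\<not> cnt A n \<le> k + 1"
    then have c: "k + 1 < cnt A n" by simp
    have "cnt A n \<le> length a" using cnt_le_card[OF fA] la by simp
    then have ka: "k + 1 < length a" using c by simp
    have "a ! (k+1) \<le> n" using galois[OF fA, of "k+1" n] ka c a_def by simp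
    moreover have kb: "k < length b" using ka lens by auto
    moreover have "b ! k \<le> a ! (k+1)" using P2 kb ka by simp
    ultimately have "b ! k \<le> n" by simp
    then have "k < cnt B n" using galois[OF fB, of k n] kb b_def by simp
    then show False using k_def by simp
  qed
  show ?thesis using ge le unfolding gd_def k_def by simp
qed

lemma interl_to_conds:
  assumes "interl_lower a b \<or> interl_same a b"
  shows "(length a = length b \<or> length a = length b + 1) \<and>
         (\<forall>i < length b. a ! i \<le> b ! i) \<and>
         (\<forall>i. i < length b \<longrightarrow> i + 1 < length a \<longrightarrow> b ! i \<le> a ! (i+1))"
  using assms
proof
  assume "interl_lower a b" then show ?thesis unfolding interl_lower_def by auto
next
  assume h: "interl_same a b"
  then have l: "length a = length b" unfolding interl_same_def by simp
  have "\<forall>i < length b. a ! i \<le> b ! i"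
  proof (intro allI impI)
    fix i assume i: "i < length b"
    show "a ! i \<le> b ! i"
    proof (cases "i + 1 < length a")
      case True then show ?thesis using h unfolding interl_same_def by auto
    next
      case False then have "i = length a - 1" using i l by simp
      then show ?thesis using h i l unfolding interl_same_def by auto
    qed
  qed
  then show ?thesis using h l unfolding interl_same_def by auto
qed

lemma conds_to_interl:
  assumes lens: "length a = length b \<or> length a = length b + 1"
    and P1: "\<forall>i < length b. a ! i \<le> b ! i"
    and P2: "\<forall>i. i < length b \<longrightarrow> i + 1 < length a \<longrightarrow> b ! i \<le> a ! (i+1)"
  shows "interl_lower a b \<or> interl_same a b"
  using lens
proof
  assume l: "length a = length b"
  have "interl_same a b" unfolding interl_same_def
  proof (intro conjI allI impI)
    show "length a = length b" by fact
    fix i assume "i + 1 < length a"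
    then show "a ! i \<le> b ! i" "b ! i \<le> a ! (i+1)" using P1 P2 l by auto
  next
    assume "1 \<le> length a"
    then show "a ! (length a - 1) \<le> b ! (length a - 1)" using P1 l by simp
  qed
  then show ?thesis by simp
next
  assume l: "length a = length b + 1"
  then have "interl_lower a b" unfolding interl_lower_def using P1 P2 by auto
  then show ?thesis by simp
qed

lemma gd_swap: "gd B A n = - gd A B n"
  unfolding gd_def by simp

lemma adj_bounds:
  assumes fA: "finite A" and fB: "finite B" and adj: "univ_adj A B"
  shows "(\<forall>n. 0 \<le> gd A B n \<and> gd A B n \<le> 1) \<or> (\<forall>n. 0 \<le> gd B A n \<and> gd B A n \<le> 1)"
proof -
  define a where "a = sorted_list_of_set A"
  define b where "b = sorted_list_of_set B"
  have la: "length a = card A" and lb: "length b = card B" unfolding a_def b_def using fA fB by auto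
  have "interl_lower a b \<or> interl_same a b \<or> interl_lower b a \<or> interl_same b a"
  proof -
    have "interl_lower a b \<or> interl_lower b a \<or> interl_same a b \<or> interl_same b a
        \<or> (A = {} \<and> card B = 1) \<or> (B = {} \<and> card A = 1)"
      using adj unfolding univ_adj_def Let_def a_def b_def by simp
    moreover have "A = {} \<and> card B = 1 \<Longrightarrow> interl_lower b a"
      unfolding interl_lower_def a_def using lb by simp
    moreover have "B = {} \<and> card A = 1 \<Longrightarrow> interl_lower a b"
      unfolding interl_lower_def b_def using la by simp
    ultimately show ?thesis by blast
  qed
  then show ?thesis
  proof (elim disjE)
    assume "interl_lower a b" then show ?thesis
      using conds_to_bounds[OF fA fB] interl_to_conds[of a b] a_def b_def by blast
  next
    assume "interl_same a b" then show ?thesis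
      using conds_to_bounds[OF fA fB] interl_to_conds[of a b] a_def b_def by blast
  next
    assume "interl_lower b a" then show ?thesis
      using conds_to_bounds[OF fB fA] interl_to_conds[of b a] a_def b_def by blast
  next
    assume "interl_same b a" then show ?thesis
      using conds_to_bounds[OF fB fA] interl_to_conds[of b a] a_def b_def by blast
  qed
qed

lemma adj_osc:
  assumes fA: "finite A" and fB: "finite B" and adj: "univ_adj A B"
  shows "\<bar>gd A B q - gd A B p\<bar> \<le> 1"
  using adj_bounds[OF assms] gd_swap[of B A] by (smt (verit))

lemma bounds_adj:
  assumes fA: "finite A" and fB: "finite B" and ne: "A \<noteq> B"
    and bd: "\<forall>n. 0 \<le> gd A B n \<and> gd A B n \<le> 1"
  shows "univ_adj A B"
proof -
  have "interl_lower (sorted_list_of_set A) (sorted_list_of_set B) \<or>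
        interl_same (sorted_list_of_set A) (sorted_list_of_set B)"
    using conds_to_interl bounds_to_conds[OF fA fB bd] by blast
  then show ?thesis using ne unfolding univ_adj_def Let_def by blast
qed

lemma univ_adj_sym: "univ_adj A B \<Longrightarrow> univ_adj B A"
  unfolding univ_adj_def Let_def by blast


lemma interval_gd:
  assumes "finite A" "finite B" "1 \<le> p" "p \<le> q"
  shows "int (card (A \<inter> {p..q})) - int (card (B \<inter> {p..q})) = gd A B q - gd A B (p - 1)"
  using interval_card[OF assms(1,3,4)] interval_card[OF assms(2,3,4)] unfolding gd_def by simp

lemma dsum_char:
  assumes fA: "finite A" and fB: "finite B"
    and bd: "\<forall>n. m \<le> gd A B n \<and> gd A B n \<le> M"
    and hM: "gd A B nM = M" and hm: "gd A B nm = m"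
  shows "d_sum A B = nat (M - m)"
  unfolding d_sum_def
proof (rule cSup_eq_maximum)
  show "nat (M - m) \<in> {nat \<bar>int (card (A \<inter> {p..q})) - int (card (B \<inter> {p..q}))\<bar> | p q. 1 \<le> p}"
  proof (cases "nm < nM")
    case True
    have "int (card (A \<inter> {nm+1..nM})) - int (card (B \<inter> {nm+1..nM})) = M - m"
      using interval_gd[OF fA fB, of "nm+1" nM] True hM hm by simp
    then show ?thesis by (intro CollectI exI[of _ "nm+1"] exI[of _ nM]) (use bd in auto)
  next
    case False
    show ?thesis
    proof (cases "nM < nm")
      case True
      have "int (card (A \<inter> {nM+1..nm})) - int (card (B \<inter> {nM+1..nm})) = m - M"
        using interval_gd[OF fA fB, of "nM+1" nm] True hM hm by simp
      then show ?thesis by (intro CollectI exI[of _ "nM+1"] exI[of _ nm]) (use bd in auto)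
    next
      case False
      then have "nM = nm" using \<open>\<not> nm < nM\<close> by simp
      then have "M = m" using hM hm by simp
      then show ?thesis by (intro CollectI exI[of _ "1::nat"] exI[of _ "0::nat"]) auto
    qed
  qed
next
  fix x assume "x \<in> {nat \<bar>int (card (A \<inter> {p..q})) - int (card (B \<inter> {p..q}))\<bar> | p q. 1 \<le> p}"
  then obtain p q where x: "x = nat \<bar>int (card (A \<inter> {p..q})) - int (card (B \<inter> {p..q}))\<bar>" and p: "1 \<le> p"
    by auto
  show "x \<le> nat (M - m)"
  proof (cases "p \<le> q")
    case True
    have "x = nat \<bar>gd A B q - gd A B (p - 1)\<bar>" using x interval_gd[OF fA fB p True] by simp
    moreover have "\<bar>gd A B q - gd A B (p - 1)\<bar> \<le> M - m"
      using bd[rule_format, of q] bd[rule_format, of "p-1"] by linarith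
    ultimately show ?thesis by simp
  next
    case False then show ?thesis using x by simp
  qed
qed

lemma gd_range:
  assumes fA: "finite A" and fB: "finite B"
  shows "\<exists>M m nM nm. (\<forall>n. m \<le> gd A B n \<and> gd A B n \<le> M) \<and> gd A B nM = M \<and> gd A B nm = m"
proof -
  have "gd A B n \<in> {- int (card B)..int (card A)}" for n
  proof -
    have "cnt A n \<le> card A" "cnt B n \<le> card B" using cnt_le_card fA fB by auto
    then show ?thesis unfolding gd_def by simp
  qed
  then have sub: "range (gd A B) \<subseteq> {- int (card B)..int (card A)}" by auto
  then have fin: "finite (range (gd A B))" using finite_subset by blast
  have ne: "range (gd A B) \<noteq> {}" by simp
  obtain nM where nM: "gd A B nM = Max (range (gd A B))" using Max_in[OF fin ne] by auto
  obtain nm where nm: "gd A B nm = Min (range (gd A B))" using Min_in[OF fin ne] by auto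
  show ?thesis
    by (rule exI[of _ "Max (range (gd A B))"], rule exI[of _ "Min (range (gd A B))"])
       (use nM nm fin in auto)
qed

lemma gd_0: "0 \<notin> A \<Longrightarrow> 0 \<notin> B \<Longrightarrow> gd A B 0 = 0"
  unfolding gd_def using cnt_0 by simp

lemma walk_tail:
  assumes "is_walk V E (X # Y # r) A B"
  shows "X = A \<and> E X Y \<and> is_walk V E (Y # r) Y B"
proof -
  have h: "\<forall>i. i + 1 < length (X # Y # r) \<longrightarrow> E ((X # Y # r) ! i) ((X # Y # r) ! (i+1))"
    using assms unfolding is_walk_def by blast
  have "\<forall>i. i + 1 < length (Y # r) \<longrightarrow> E ((Y # r) ! i) ((Y # r) ! (i+1))"
  proof (intro allI impI)
    fix i assume "i + 1 < length (Y # r)"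
    then show "E ((Y # r) ! i) ((Y # r) ! (i+1))" using h[rule_format, of "Suc i"] by simp
  qed
  moreover have "E X Y" using h[rule_format, of 0] by simp
  ultimately show ?thesis using assms unfolding is_walk_def by auto
qed

lemma walk_single_eq: "is_walk V E [X] A B \<Longrightarrow> X = A \<and> X = B"
  unfolding is_walk_def by auto

lemma walk_vertex: "is_walk V E ps A B \<Longrightarrow> V A \<and> V B"
  unfolding is_walk_def by (metis hd_in_set last_in_set)

lemma walk_osc:
  "is_walk vertex univ_adj ps A B \<Longrightarrow> \<bar>gd A B q - gd A B p\<bar> \<le> int (length ps) - 1"
proof (induction ps arbitrary: A)
  case Nil then show ?case unfolding is_walk_def by simp
next
  case (Cons X rest)
  show ?case
  proof (cases rest)
    case Nil
    then have "A = B" using walk_single_eq Cons.prems by metis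
    then show ?thesis unfolding gd_def by simp
  next
    case (Cons Y r)
    then have Cons2: "rest = Y # r" by simp
    have t: "X = A \<and> univ_adj X Y \<and> is_walk vertex univ_adj (Y # r) Y B"
      using walk_tail Cons.prems Cons2 by metis
    have vA: "vertex A" and vY: "vertex Y" and vB: "vertex B"
      using walk_vertex[OF Cons.prems] walk_vertex[of vertex univ_adj "Y # r" Y B] t by auto
    have ih: "\<bar>gd Y B q - gd Y B p\<bar> \<le> int (length rest) - 1" using Cons2 t Cons.IH by simp
    have a: "\<bar>gd A Y q - gd A Y p\<bar> \<le> 1"
      using adj_osc[of A Y] vA vY t unfolding vertex_def by auto
    have "gd A B q - gd A B p = (gd A Y q - gd A Y p) + (gd Y B q - gd Y B p)"
      unfolding gd_def by simp
    then show ?thesis using ih a by simp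
  qed
qed


lemma gd_Suc:
  assumes "finite A" "finite B"
  shows "gd A B (Suc n) = gd A B n + (if Suc n \<in> A then 1 else 0) - (if Suc n \<in> B then 1 else 0)"
  using cnt_Suc[OF assms(1), of n] cnt_Suc[OF assms(2), of n] unfolding gd_def by auto

lemma step:
  assumes vA: "vertex A" and vB: "vertex B"
    and bd: "\<forall>n. m \<le> gd A B n \<and> gd A B n \<le> M"
    and hM: "gd A B nM = M" and hm: "gd A B nm = m" and Mpos: "M > 0"
  shows "\<exists>C. vertex C \<and> univ_adj A C \<and> d_sum C B = nat (M - 1 - m) \<and>
             (card A = card B \<longrightarrow> card C = card A)"
proof -
  have fA: "finite A" and fB: "finite B" and A0: "0 \<notin> A" and B0: "0 \<notin> B"
    using vA vB unfolding vertex_def by auto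
  have g0: "gd A B 0 = 0" using gd_0 A0 B0 by simp
  have m0: "m \<le> 0" using bd g0 by metis
  define F where "F n = int (cnt A n) - (if gd A B n = M then 1 else 0)" for n
  define C where "C = {n. 1 \<le> n \<and> F n = F (n - 1) + 1}"
  have F0: "F 0 = 0" unfolding F_def using g0 Mpos cnt_0[OF A0] by simp
  have Fstep: "F (Suc n) = F n \<or> F (Suc n) = F n + 1" for n
  proof -
    have "m \<le> gd A B n \<and> gd A B n \<le> M" "m \<le> gd A B (Suc n) \<and> gd A B (Suc n) \<le> M"
      using bd by auto
    then show ?thesis using gd_Suc[OF fA fB, of n] cnt_Suc[OF fA, of n] unfolding F_def
      by (auto split: if_splits)
  qed
  obtain N where N: "\<forall>x\<in>A \<union> B. x \<le> N" using finite_bound[of "A \<union> B"] fA fB by auto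
  have CN: "C \<subseteq> {..N}"
  proof
    fix x assume x: "x \<in> C"
    show "x \<in> {..N}"
    proof (rule ccontr)
      assume "x \<notin> {..N}"
      then have xN: "x > N" by simp
      then obtain k where k: "x = Suc k" by (cases x) auto
      have "Suc k \<notin> A" "Suc k \<notin> B" using N xN k by (auto dest: bspec[where x="Suc k"])
      then have "F (Suc k) = F k" unfolding F_def using gd_Suc[OF fA fB, of k] cnt_Suc[OF fA, of k]
        by simp
      then show False using x k unfolding C_def by simp
    qed
  qed
  then have fC: "finite C" using finite_subset by blast
  have C0: "0 \<notin> C" unfolding C_def by simp
  have vC: "vertex C" using fC C0 unfolding vertex_def by simp
  have cntC: "int (cnt C n) = F n" for n
  proof (induction n)
    case 0 then show ?case using cnt_0[OF C0] F0 by simp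
  next
    case (Suc n)
    have "Suc n \<in> C \<longleftrightarrow> F (Suc n) = F n + 1" unfolding C_def by simp
    then show ?case using cnt_Suc[OF fC, of n] Suc Fstep[of n] by auto
  qed
  have gAC: "gd A C n = (if gd A B n = M then 1 else 0)" for n
    using cntC[of n] unfolding gd_def F_def by simp
  have gCB: "gd C B n = gd A B n - (if gd A B n = M then 1 else 0)" for n
    using cntC[of n] unfolding gd_def F_def by simp
  have ne: "A \<noteq> C"
  proof
    assume "A = C"
    then have "gd A C nM = 0" unfolding gd_def by simp
    then show False using gAC[of nM] hM by simp
  qed
  have adj: "univ_adj A C"
    by (rule bounds_adj[OF fA fC ne]) (simp add: gAC)
  have bd2: "\<forall>n. m \<le> gd C B n \<and> gd C B n \<le> M - 1"
  proof
    fix n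
    have "m \<le> gd A B n \<and> gd A B n \<le> M" using bd by simp
    then show "m \<le> gd C B n \<and> gd C B n \<le> M - 1" unfolding gCB using m0 Mpos by auto
  qed
  have ds: "d_sum C B = nat (M - 1 - m)"
    by (rule dsum_char[OF fC fB bd2, of nM nm]) (use gCB hM hm m0 Mpos in auto)
  have cc: "card C = card A" if eq: "card A = card B"
  proof -
    have "cnt A N = card A" "cnt B N = card B" using N cnt_big by auto
    moreover have "cnt C N = card C" using CN cnt_big by auto
    ultimately have "gd A B N = 0" using eq unfolding gd_def by simp
    then have "F N = int (cnt A N)" unfolding F_def using Mpos by simp
    then show ?thesis using cntC[of N] \<open>cnt A N = card A\<close> \<open>cnt C N = card C\<close> by simp
  qed
  show ?thesis using vC adj ds cc by blast
qed


lemma walk_cons: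
  assumes "is_walk V E ps C B" "V A" "E A C"
  shows "is_walk V E (A # ps) A B"
  unfolding is_walk_def
proof (intro conjI allI impI)
  have ne: "ps \<noteq> []" and h: "hd ps = C" and l: "last ps = B" and v: "\<forall>X\<in>set ps. V X"
    and e: "\<forall>i. i + 1 < length ps \<longrightarrow> E (ps ! i) (ps ! (i+1))"
    using assms(1) unfolding is_walk_def by auto
  show "A # ps \<noteq> []" "hd (A # ps) = A" by auto
  show "last (A # ps) = B" using ne l by simp
  show "\<forall>X\<in>set (A # ps). V X" using v assms(2) by simp
  fix i assume i: "i + 1 < length (A # ps)"
  show "E ((A # ps) ! i) ((A # ps) ! (i + 1))"
  proof (cases i)
    case 0 then show ?thesis using ne h assms(3) by (simp add: hd_conv_nth)
  next
    case (Suc j) then show ?thesis using e i by simp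
  qed
qed

lemma walk_snoc:
  assumes "is_walk V E ps A C" "V B" "E C B"
  shows "is_walk V E (ps @ [B]) A B"
  unfolding is_walk_def
proof (intro conjI allI impI)
  have ne: "ps \<noteq> []" and h: "hd ps = A" and l: "last ps = C" and v: "\<forall>X\<in>set ps. V X"
    and e: "\<forall>i. i + 1 < length ps \<longrightarrow> E (ps ! i) (ps ! (i+1))"
    using assms(1) unfolding is_walk_def by auto
  show "ps @ [B] \<noteq> []" "last (ps @ [B]) = B" by auto
  show "hd (ps @ [B]) = A" using ne h by simp
  show "\<forall>X\<in>set (ps @ [B]). V X" using v assms(2) by simp
  fix i assume i: "i + 1 < length (ps @ [B])"
  show "E ((ps @ [B]) ! i) ((ps @ [B]) ! (i + 1))"
  proof (cases "i + 1 < length ps")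
    case True then show ?thesis using e by (simp add: nth_append)
  next
    case False
    then have ii: "i + 1 = length ps" using i by simp
    then have "ps ! i = C" using l ne by (metis add_diff_cancel_right' last_conv_nth)
    then show ?thesis using ii assms(3) by (simp add: nth_append)
  qed
qed

lemma walk_mono:
  assumes "is_walk V E ps A B" "\<forall>X\<in>set ps. V' X"
    "\<forall>X Y. X \<in> set ps \<longrightarrow> Y \<in> set ps \<longrightarrow> E X Y \<longrightarrow> E' X Y"
  shows "is_walk V' E' ps A B"
proof -
  have e: "\<forall>i. i + 1 < length ps \<longrightarrow> E (ps ! i) (ps ! (i+1))" using assms(1) unfolding is_walk_def by simp
  have "\<forall>i. i + 1 < length ps \<longrightarrow> E' (ps ! i) (ps ! (i+1))"
  proof (intro allI impI)
    fix i assume i: "i + 1 < length ps"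
    then have "ps ! i \<in> set ps" "ps ! (i+1) \<in> set ps" by auto
    then show "E' (ps ! i) (ps ! (i+1))" using e i assms(3) by blast
  qed
  then show ?thesis using assms(1,2) unfolding is_walk_def by blast
qed

lemma d_sum_sym: "d_sum A B = d_sum B A"
  unfolding d_sum_def by (simp add: abs_minus_commute)

lemma dsum0_eq:
  assumes vA: "vertex A" and vB: "vertex B" and d0: "d_sum A B = 0"
  shows "A = B"
proof -
  have fA: "finite A" and fB: "finite B" and A0: "0 \<notin> A" and B0: "0 \<notin> B"
    using vA vB unfolding vertex_def by auto
  obtain M m nM nm where bd: "\<forall>n. m \<le> gd A B n \<and> gd A B n \<le> M" and hM: "gd A B nM = M"
    and hm: "gd A B nm = m" using gd_range[OF fA fB] by blast
  have "d_sum A B = nat (M - m)" using dsum_char[OF fA fB bd hM hm] .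
  moreover have "m \<le> gd A B 0 \<and> gd A B 0 \<le> M" using bd by blast
  then have "m \<le> 0" "0 \<le> M" using gd_0[OF A0 B0] by auto
  ultimately have Mm: "M \<le> m" "m \<le> 0" "0 \<le> M" using d0 by auto
  have z: "\<forall>n. gd A B n = 0"
  proof
    fix n show "gd A B n = 0" using bd[rule_format, of n] Mm by linarith
  qed
  show ?thesis
  proof (rule set_eqI)
    fix x show "x \<in> A \<longleftrightarrow> x \<in> B"
    proof (cases x)
      case 0 then show ?thesis using A0 B0 by simp
    next
      case (Suc k) then show ?thesis using gd_Suc[OF fA fB, of k] z by (auto split: if_splits)
    qed
  qed
qed

lemma path:
  "\<forall>A B. vertex A \<longrightarrow> vertex B \<longrightarrow> d_sum A B = d \<longrightarrow>
    (\<exists>ps. is_walk vertex univ_adj ps A B \<and> length ps = Suc d \<and>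
        (card A = card B \<longrightarrow> (\<forall>X\<in>set ps. card X = card A)))"
proof (induction d)
  case 0
  show ?case
  proof (intro allI impI)
    fix A B assume vA: "vertex A" and vB: "vertex B" and d: "d_sum A B = 0"
    have AB: "A = B" using dsum0_eq[OF vA vB d] .
    have w: "is_walk vertex univ_adj [A] A B" unfolding is_walk_def
    proof (intro conjI allI impI)
      fix i assume "i + 1 < length [A]" then show "univ_adj ([A] ! i) ([A] ! (i + 1))" by simp
    qed (use vA AB in simp_all)
    have c: "card A = card B \<longrightarrow> (\<forall>X\<in>set [A]. card X = card A)" by simp
    show "\<exists>ps. is_walk vertex univ_adj ps A B \<and> length ps = Suc 0 \<and>
        (card A = card B \<longrightarrow> (\<forall>X\<in>set ps. card X = card A))"
      using w c by (metis length_Cons list.size(3))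
  qed
next
  case (Suc d)
  show ?case
  proof (intro allI impI)
    fix A B assume vA: "vertex A" and vB: "vertex B" and d: "d_sum A B = Suc d"
    have fA: "finite A" and fB: "finite B" and A0: "0 \<notin> A" and B0: "0 \<notin> B"
      using vA vB unfolding vertex_def by auto
    obtain M m nM nm where bd: "\<forall>n. m \<le> gd A B n \<and> gd A B n \<le> M" and hM: "gd A B nM = M"
      and hm: "gd A B nm = m" using gd_range[OF fA fB] by blast
    have ds: "d_sum A B = nat (M - m)" using dsum_char[OF fA fB bd hM hm] .
    have "m \<le> gd A B 0 \<and> gd A B 0 \<le> M" using bd by blast
    then have m0: "m \<le> 0" and M0: "0 \<le> M" using gd_0[OF A0 B0] by auto
    have Mm: "M - m = int (Suc d)" using ds d by simp
    show "\<exists>ps. is_walk vertex univ_adj ps A B \<and> length ps = Suc (Suc d) \<and>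
        (card A = card B \<longrightarrow> (\<forall>X\<in>set ps. card X = card A))"
    proof (cases "M > 0")
      case True
      obtain C where vC: "vertex C" and adj: "univ_adj A C" and dC: "d_sum C B = nat (M - 1 - m)"
        and cC: "card A = card B \<longrightarrow> card C = card A"
        using step[OF vA vB bd hM hm True] by blast
      have dd: "d_sum C B = d" using dC Mm by simp
      obtain ps where w: "is_walk vertex univ_adj ps C B" and l: "length ps = Suc d"
        and c: "card C = card B \<longrightarrow> (\<forall>X\<in>set ps. card X = card C)"
        using Suc.IH[rule_format, OF vC vB dd] by blast
      have w2: "is_walk vertex univ_adj (A # ps) A B" using walk_cons[OF w vA adj] .
      have c2: "card A = card B \<longrightarrow> (\<forall>X\<in>set (A # ps). card X = card A)"
      proof (intro impI ballI)
        fix X assume e: "card A = card B" and X: "X \<in> set (A # ps)"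
        have e2: "card C = card A" using cC e by blast
        show "card X = card A"
        proof (cases "X = A")
          case False
          then have "X \<in> set ps" using X by simp
          then show ?thesis using c e e2 by simp
        qed simp
      qed
      have l2: "length (A # ps) = Suc (Suc d)" using l by simp
      show ?thesis using w2 c2 l2 by blast
    next
      case False
      then have M00: "M = 0" using M0 by simp
      have bd': "\<forall>n. - M \<le> gd B A n \<and> gd B A n \<le> - m"
      proof
        fix n show "- M \<le> gd B A n \<and> gd B A n \<le> - m"
          using bd[rule_format, of n] gd_swap[of B A n] by linarith
      qed
      have hM': "gd B A nm = - m" and hm': "gd B A nM = - M" using hM hm gd_swap[of B A] by auto
      have pos: "- m > 0" using Mm M00 by simp
      obtain C where vC: "vertex C" and adj: "univ_adj B C" and dC: "d_sum C A = nat (- m - 1 - - M)"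
        and cC: "card B = card A \<longrightarrow> card C = card B"
        using step[OF vB vA bd' hM' hm' pos] by blast
      have dd: "d_sum A C = d" using dC Mm d_sum_sym[of A C] by simp
      obtain ps where w: "is_walk vertex univ_adj ps A C" and l: "length ps = Suc d"
        and c: "card A = card C \<longrightarrow> (\<forall>X\<in>set ps. card X = card A)"
        using Suc.IH[rule_format, OF vA vC dd] by blast
      have w2: "is_walk vertex univ_adj (ps @ [B]) A B" using walk_snoc[OF w vB univ_adj_sym[OF adj]] .
      have c2: "card A = card B \<longrightarrow> (\<forall>X\<in>set (ps @ [B]). card X = card A)"
      proof (intro impI ballI)
        fix X assume e: "card A = card B" and X: "X \<in> set (ps @ [B])"
        have e2: "card C = card B" using cC e by simp
        show "card X = card A"
        proof (cases "X = B")
          case False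
          then have "X \<in> set ps" using X by simp
          then show ?thesis using c e e2 by simp
        qed (use e in simp)
      qed
      have l2: "length (ps @ [B]) = Suc (Suc d)" using l by simp
      show ?thesis using w2 c2 l2 by blast
    qed
  qed
qed

lemma walk_len:
  assumes w: "is_walk vertex univ_adj qs A B"
  shows "d_sum A B \<le> length qs - 1"
proof -
  have vA: "vertex A" and vB: "vertex B" using walk_vertex[OF w] by auto
  have fA: "finite A" and fB: "finite B" using vA vB unfolding vertex_def by auto
  obtain M m nM nm where bd: "\<forall>n. m \<le> gd A B n \<and> gd A B n \<le> M" and hM: "gd A B nM = M"
    and hm: "gd A B nm = m" using gd_range[OF fA fB] by blast
  have ds: "d_sum A B = nat (M - m)" using dsum_char[OF fA fB bd hM hm] .
  have "\<bar>gd A B nM - gd A B nm\<bar> \<le> int (length qs) - 1" using walk_osc[OF w] .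
  moreover have "qs \<noteq> []" using w unfolding is_walk_def by simp
  ultimately show ?thesis using ds hM hm by (cases qs) auto
qed

lemma dI_eq:
  assumes vA: "vertex A" and vB: "vertex B"
  shows "d_I A B = enat (d_sum A B)"
proof (rule antisym)
  obtain ps where w: "is_walk vertex univ_adj ps A B" and l: "length ps = Suc (d_sum A B)"
    using path vA vB by blast
  show "d_I A B \<le> enat (d_sum A B)"
    unfolding d_I_def graph_dist_def
    using INF_lower[of ps "{ps. is_walk vertex univ_adj ps A B}" "\<lambda>ps. enat (length ps - 1)"] w l
    by simp
  show "enat (d_sum A B) \<le> d_I A B"
    unfolding d_I_def graph_dist_def
    by (rule INF_greatest) (use walk_len in auto)
qed

lemma univ_to_kalton:
  assumes "finite X" "finite Y" "card X = k" "card Y = k" "univ_adj X Y"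
  shows "kalton_adj k X Y"
proof -
  have la: "length (sorted_list_of_set X) = k" and lb: "length (sorted_list_of_set Y) = k"
    using assms by auto
  have n1: "\<not> interl_lower (sorted_list_of_set X) (sorted_list_of_set Y)"
    and n2: "\<not> interl_lower (sorted_list_of_set Y) (sorted_list_of_set X)"
    unfolding interl_lower_def using la lb by auto
  have n3: "\<not> (X = {} \<and> card Y = 1)" and n4: "\<not> (Y = {} \<and> card X = 1)" using assms by auto
  have "X \<noteq> Y \<and> (interl_lower (sorted_list_of_set X) (sorted_list_of_set Y)
     \<or> interl_lower (sorted_list_of_set Y) (sorted_list_of_set X)
     \<or> interl_same (sorted_list_of_set X) (sorted_list_of_set Y)
     \<or> interl_same (sorted_list_of_set Y) (sorted_list_of_set X)
     \<or> (X = {} \<and> card Y = 1) \<or> (Y = {} \<and> card X = 1))"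
    using assms(5) unfolding univ_adj_def Let_def by simp
  then show ?thesis using n1 n2 n3 n4 assms(3,4) unfolding kalton_adj_def Let_def by blast
qed

lemma kalton_to_univ: "kalton_adj k X Y \<Longrightarrow> univ_adj X Y"
  unfolding univ_adj_def kalton_adj_def Let_def by blast

theorem theorem5p1:
  shows "(\<forall>A B. vertex A \<longrightarrow> vertex B \<longrightarrow> enat (d_sum A B) = d_I A B) \<and>
    (\<forall>A B k. vertex A \<longrightarrow> vertex B \<longrightarrow> card A = k \<longrightarrow> card B = k \<longrightarrow>
       (\<exists>ps. is_walk vertex univ_adj ps A B \<and> (\<forall>X \<in> set ps. card X = k) \<and>
             enat (length ps - 1) = d_I A B)) \<and>
    (\<forall>A B k. vertex A \<longrightarrow> vertex B \<longrightarrow> card A = k \<longrightarrow> card B = k \<longrightarrow>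
       d_I A B = d_I_k k A B)"
proof (intro conjI allI impI)
  fix A B assume vA: "vertex A" and vB: "vertex B"
  then show "enat (d_sum A B) = d_I A B" using dI_eq by simp
next
  fix A B k assume vA: "vertex A" and vB: "vertex B" and cA: "card A = k" and cB: "card B = k"
  obtain ps where w: "is_walk vertex univ_adj ps A B" and l: "length ps = Suc (d_sum A B)"
    and c: "card A = card B \<longrightarrow> (\<forall>X\<in>set ps. card X = card A)"
    using path vA vB by blast
  show "\<exists>ps. is_walk vertex univ_adj ps A B \<and> (\<forall>X \<in> set ps. card X = k) \<and>
             enat (length ps - 1) = d_I A B"
    by (rule exI[of _ ps]) (use w l c cA cB dI_eq[OF vA vB] in auto)
next
  fix A B k assume vA: "vertex A" and vB: "vertex B" and cA: "card A = k" and cB: "card B = k"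
  obtain ps where w: "is_walk vertex univ_adj ps A B" and l: "length ps = Suc (d_sum A B)"
    and c: "card A = card B \<longrightarrow> (\<forall>X\<in>set ps. card X = card A)"
    using path vA vB by blast
  have vps: "\<forall>X\<in>set ps. vertex X" using w unfolding is_walk_def by simp
  have wk: "is_walk (\<lambda>X. vertex X \<and> card X = k) (kalton_adj k) ps A B"
    by (rule walk_mono[OF w]) (use vps c cA cB univ_to_kalton in \<open>auto simp: vertex_def\<close>)
  have le: "d_I_k k A B \<le> enat (d_sum A B)"
    unfolding d_I_k_def graph_dist_def
    using INF_lower[of ps "{ps. is_walk (\<lambda>X. vertex X \<and> card X = k) (kalton_adj k) ps A B}"
        "\<lambda>ps. enat (length ps - 1)"] wk l
    by simp
  have ge: "enat (d_sum A B) \<le> d_I_k k A B"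
    unfolding d_I_k_def graph_dist_def
  proof (rule INF_greatest)
    fix qs assume "qs \<in> {ps. is_walk (\<lambda>X. vertex X \<and> card X = k) (kalton_adj k) ps A B}"
    then have q: "is_walk (\<lambda>X. vertex X \<and> card X = k) (kalton_adj k) qs A B" by simp
    have "is_walk vertex univ_adj qs A B"
      by (rule walk_mono[OF q]) (use q kalton_to_univ in \<open>auto simp: is_walk_def\<close>)
    then show "enat (d_sum A B) \<le> enat (length qs - 1)" using walk_len by simp
  qed
  show "d_I A B = d_I_k k A B" using le ge dI_eq[OF vA vB] by simp
qed

end
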